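(* Let $\mathfrak g$ be a $7$-dimensional real nilpotent Lie algebra and let $\varphi\in\Lambda^3\mathfrak g^*$ define a calibrated $\mathrm{G}_2$-structure on $\mathfrak g$. Then $\varphi$ is not exact; in particular $H^3(\mathfrak g^* )\neq0$.
   Context: A $3$-form $\varphi\in\Lambda^3\mathfrak g^*$ on a $7$-dimensional Lie algebra defines a $\mathrm{G}_2$-structure if there is a basis $f^1,\dots,f^7$ of $\mathfrak g^*$ with $\varphi=f^{127}+f^{347}+f^{567}+f^{135}-f^{236}-f^{146}-f^{245}$; it is calibrated if $d\varphi=0$, where $d$ is the Chevalley–Eilenberg differential, and $H^3(\mathfrak g^* )$ is the corresponding cohomology. *)

theory Defs
  imports "HOL-Analysis.Analysis"
begin

definition lie_algebra :: "('a::real_vector \<Rightarrow> 'a \<Rightarrow> 'a) \<Rightarrow> bool" where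
  "lie_algebra br \<longleftrightarrow> bilinear br \<and> (\<forall>x. br x x = 0) \<and>
     (\<forall>x y z. br x (br y z) + br y (br z x) + br z (br x y) = 0)"

fun lcs :: "('a::real_vector \<Rightarrow> 'a \<Rightarrow> 'a) \<Rightarrow> nat \<Rightarrow> 'a set" where
  "lcs br 0 = UNIV"
| "lcs br (Suc n) = span {br x y | x y. y \<in> lcs br n}"

definition nilpotent_lie :: "('a::real_vector \<Rightarrow> 'a \<Rightarrow> 'a) \<Rightarrow> bool" where
  "nilpotent_lie br \<longleftrightarrow> lie_algebra br \<and> (\<exists>n. lcs br n = {0})"

definition two_form :: "('a::real_vector \<Rightarrow> 'a \<Rightarrow> real) \<Rightarrow> bool" where
  "two_form b \<longleftrightarrow> bilinear b \<and> (\<forall>x. b x x = 0)"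

definition three_form :: "('a::real_vector \<Rightarrow> 'a \<Rightarrow> 'a \<Rightarrow> real) \<Rightarrow> bool" where
  "three_form p \<longleftrightarrow> (\<forall>y z. linear (\<lambda>x. p x y z)) \<and> (\<forall>x z. linear (\<lambda>y. p x y z)) \<and>
     (\<forall>x y. linear (\<lambda>z. p x y z)) \<and>
     (\<forall>x z. p x x z = 0) \<and> (\<forall>x y. p x y y = 0) \<and> (\<forall>x y. p x y x = 0)"

text \<open>Chevalley--Eilenberg differential
  d a (x_0,...,x_k) = sum_{i<j} (-1)^(i+j) a([x_i,x_j], x_0,..^i..^j..,x_k).\<close>
definition ce_d2 :: "('a \<Rightarrow> 'a \<Rightarrow> 'a) \<Rightarrow> ('a \<Rightarrow> 'a \<Rightarrow> real) \<Rightarrow> ('a \<Rightarrow> 'a \<Rightarrow> 'a \<Rightarrow> real)" where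
  "ce_d2 br b = (\<lambda>x y z. - b (br x y) z + b (br x z) y - b (br y z) x)"

definition ce_d3 :: "('a \<Rightarrow> 'a \<Rightarrow> 'a) \<Rightarrow> ('a \<Rightarrow> 'a \<Rightarrow> 'a \<Rightarrow> real) \<Rightarrow> ('a \<Rightarrow> 'a \<Rightarrow> 'a \<Rightarrow> 'a \<Rightarrow> real)" where
  "ce_d3 br p = (\<lambda>x y z w. - p (br x y) z w + p (br x z) y w - p (br x w) y z
                            - p (br y z) x w + p (br y w) x z - p (br z w) x y)"

definition exact3 :: "('a::real_vector \<Rightarrow> 'a \<Rightarrow> 'a) \<Rightarrow> ('a \<Rightarrow> 'a \<Rightarrow> 'a \<Rightarrow> real) \<Rightarrow> bool" where
  "exact3 br p \<longleftrightarrow> (\<exists>b. two_form b \<and> p = ce_d2 br b)"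

definition H3_nonzero :: "('a::real_vector \<Rightarrow> 'a \<Rightarrow> 'a) \<Rightarrow> bool" where
  "H3_nonzero br \<longleftrightarrow> (\<exists>p. three_form p \<and> ce_d3 br p = (\<lambda>x y z w. 0) \<and> \<not> exact3 br p)"

definition wedge3 :: "('a \<Rightarrow> real) \<Rightarrow> ('a \<Rightarrow> real) \<Rightarrow> ('a \<Rightarrow> real) \<Rightarrow> 'a \<Rightarrow> 'a \<Rightarrow> 'a \<Rightarrow> real" where
  "wedge3 a b c x y z = a x * (b y * c z - b z * c y) - a y * (b x * c z - b z * c x)
                        + a z * (b x * c y - b y * c x)"

definition dual_basis7 :: "(nat \<Rightarrow> 'a::real_vector \<Rightarrow> real) \<Rightarrow> bool" where
  "dual_basis7 f \<longleftrightarrow> (\<forall>i\<in>{1..7}. linear (f i)) \<and>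
     (\<forall>c. (\<forall>x. (\<Sum>i=1..7. c i * f i x) = 0) \<longrightarrow> (\<forall>i\<in>{1..7}. c i = 0))"

definition G2_structure :: "('a::real_vector \<Rightarrow> 'a \<Rightarrow> 'a \<Rightarrow> real) \<Rightarrow> bool" where
  "G2_structure p \<longleftrightarrow> (\<exists>f. dual_basis7 f \<and>
     p = (\<lambda>x y z. wedge3 (f 1) (f 2) (f 7) x y z + wedge3 (f 3) (f 4) (f 7) x y z
                 + wedge3 (f 5) (f 6) (f 7) x y z + wedge3 (f 1) (f 3) (f 5) x y z
                 - wedge3 (f 2) (f 3) (f 6) x y z - wedge3 (f 1) (f 4) (f 6) x y z
                 - wedge3 (f 2) (f 4) (f 5) x y z))"

definition calibrated_G2 :: "('a::real_vector \<Rightarrow> 'a \<Rightarrow> 'a) \<Rightarrow> ('a \<Rightarrow> 'a \<Rightarrow> 'a \<Rightarrow> real) \<Rightarrow> bool" where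
  "calibrated_G2 br p \<longleftrightarrow> G2_structure p \<and> ce_d3 br p = (\<lambda>x y z w. 0)"

end

theory Submission
  imports Defs
begin

lemma riesz:
  fixes f :: "'a::euclidean_space \<Rightarrow> real"
  assumes "linear f"
  shows "f x = x \<bullet> (\<Sum>b\<in>Basis. f b *\<^sub>R b)"
  using Linear_Algebra.linear_componentwise[OF assms, of x 1]
  by (simp add: inner_sum_right mult.commute)

lemma sum7: "(\<Sum>i=1..7. g i) = g 1 + g 2 + g 3 + g 4 + g 5 + g 6 + (g (7::nat)::real)"
  by (simp add: eval_nat_numeral)

lemma set7: "{1..7::nat} = {1,2,3,4,5,6,7}"
  by (auto simp: eval_nat_numeral)

lemma dual_kernel:
  fixes f :: "nat \<Rightarrow> 'a::euclidean_space \<Rightarrow> real"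
  assumes D: "DIM('a) = 7" and db: "dual_basis7 f" and z: "\<forall>i\<in>{1..7}. f i x = 0"
  shows "x = 0"
proof -
  define a where "a i = (\<Sum>b\<in>Basis. f i b *\<^sub>R b)" for i
  have lin: "\<And>i. i\<in>{1..7} \<Longrightarrow> linear (f i)" using db by (simp add: dual_basis7_def)
  have fa: "f i y = y \<bullet> a i" if "i\<in>{1..7}" for i y
    using riesz[OF lin[OF that]] unfolding a_def by assumption
  have indep: "\<forall>i\<in>{1..7}. c i = 0" if h: "(\<Sum>i=1..7. c i *\<^sub>R a i) = 0" for c
  proof -
    have "\<forall>y. (\<Sum>i=1..7. c i * f i y) = 0"
    proof
      fix y
      have "(\<Sum>i=1..7. c i * f i y) = (\<Sum>i=1..7. y \<bullet> (c i *\<^sub>R a i))"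
        by (rule sum.cong) (auto simp: fa)
      also have "\<dots> = y \<bullet> (\<Sum>i=1..7. c i *\<^sub>R a i)" by (simp add: inner_sum_right)
      finally show "(\<Sum>i=1..7. c i * f i y) = 0" using h by simp
    qed
    then show "\<forall>i\<in>{1..7}. c i = 0" using db unfolding dual_basis7_def by blast
  qed
  have inj: "inj_on a {1..7}"
  proof (rule inj_onI, rule ccontr)
    fix i j assume i: "i \<in> {1..7::nat}" and j: "j\<in>{1..7::nat}" and e: "a i = a j" and ne: "i \<noteq> j"
    define c where "c k = (if k = i then 1 else 0) - (if k = j then (1::real) else 0)" for k
    have "(\<Sum>k=1..7. c k *\<^sub>R a k) = (\<Sum>k=1..7. (if k = i then a k else 0) - (if k = j then a k else 0))"
      by (rule sum.cong) (auto simp: c_def)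
    also have "\<dots> = a i - a j" using i j by (simp add: sum_subtractf)
    finally have "(\<Sum>k=1..7. c k *\<^sub>R a k) = 0" using e by simp
    then have "c i = 0" using indep i by blast
    then show False using ne by (simp add: c_def)
  qed
  have indA: "independent (a ` {1..7})"
  proof
    assume "dependent (a ` {1..7})"
    then obtain u where u: "\<exists>v\<in>a`{1..7}. u v \<noteq> 0" "(\<Sum>v\<in>a`{1..7}. u v *\<^sub>R v) = 0"
      using dependent_finite[of "a ` {1..7}"] by auto
    have "(\<Sum>v\<in>a`{1..7}. u v *\<^sub>R v) = (\<Sum>k=1..7. u (a k) *\<^sub>R a k)"
      by (rule sum.reindex_cong[OF inj]) auto
    then have "(\<Sum>k=1..7. u (a k) *\<^sub>R a k) = 0" using u(2) by simp
    then have "\<forall>k\<in>{1..7}. u (a k) = 0" using indep[of "\<lambda>k. u (a k)"] by simp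
    with u(1) show False by auto
  qed
  have card: "card (a`{1..7}) = 7" using card_image[OF inj] by simp
  have sp: "span (a`{1..7}) = UNIV"
    using dim_eq_full dim_eq_card_independent[OF indA] card D by metis
  have orth: "\<And>y. y \<in> a`{1..7} \<Longrightarrow> orthogonal x y" using fa z by (auto simp: orthogonal_def)
  have "orthogonal x x" using orthogonal_to_span[of x "a`{1..7}" x] orth sp by auto
  then show "x = 0" by (simp add: orthogonal_def)
qed

lemma lag: fixes a1 a2 a3 a4 a5 a6 a7 b1 b2 b3 b4 b5 b6 b7 :: real
  shows "(a1^2+a2^2+a3^2+a4^2+a5^2+a6^2+a7^2)*(b1^2+b2^2+b3^2+b4^2+b5^2+b6^2+b7^2) - (a1*b1+a2*b2+a3*b3+a4*b4+a5*b5+a6*b6+a7*b7)^2 =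
   (- a2*b7 + a7*b2 - a3*b5 + a5*b3 + a4*b6 - a6*b4)^2 + (a1*b7 - a7*b1 + a3*b6 - a6*b3 + a4*b5 - a5*b4)^2 + (- a4*b7 + a7*b4 + a1*b5 - a5*b1 - a2*b6 + a6*b2)^2 + (a3*b7 - a7*b3 - a1*b6 + a6*b1 - a2*b5 + a5*b2)^2 + (- a6*b7 + a7*b6 - a1*b3 + a3*b1 + a2*b4 - a4*b2)^2 + (a5*b7 - a7*b5 + a2*b3 - a3*b2 + a1*b4 - a4*b1)^2 + (- a1*b2 + a2*b1 - a3*b4 + a4*b3 - a5*b6 + a6*b5)^2"
  by algebra

lemma sq7: fixes a1 a2 a3 a4 a5 a6 a7 :: real
  assumes h: "a1^2+a2^2+a3^2+a4^2+a5^2+a6^2+a7^2 = 0"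
  shows "a1 = 0 \<and> a2 = 0 \<and> a3 = 0 \<and> a4 = 0 \<and> a5 = 0 \<and> a6 = 0 \<and> a7 = 0"
proof -
  have "a1^2 = 0 \<and> a2^2 = 0 \<and> a3^2 = 0 \<and> a4^2 = 0 \<and> a5^2 = 0 \<and> a6^2 = 0 \<and> a7^2 = 0"
    using h zero_le_power2[of a1] zero_le_power2[of a2] zero_le_power2[of a3] zero_le_power2[of a4]
      zero_le_power2[of a5] zero_le_power2[of a6] zero_le_power2[of a7]
    by (intro conjI; linarith)
  then show ?thesis by simp
qed

lemma key: fixes a1 a2 a3 a4 a5 a6 a7 b1 b2 b3 b4 b5 b6 b7 :: real
  assumes "- a2*b7 + a7*b2 - a3*b5 + a5*b3 + a4*b6 - a6*b4 = 0" "a1*b7 - a7*b1 + a3*b6 - a6*b3 + a4*b5 - a5*b4 = 0" "- a4*b7 + a7*b4 + a1*b5 - a5*b1 - a2*b6 + a6*b2 = 0" "a3*b7 - a7*b3 - a1*b6 + a6*b1 - a2*b5 + a5*b2 = 0" "- a6*b7 + a7*b6 - a1*b3 + a3*b1 + a2*b4 - a4*b2 = 0" "a5*b7 - a7*b5 + a2*b3 - a3*b2 + a1*b4 - a4*b1 = 0" "- a1*b2 + a2*b1 - a3*b4 + a4*b3 - a5*b6 + a6*b5 = 0"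
  shows "(a1^2+a2^2+a3^2+a4^2+a5^2+a6^2+a7^2)*b1 - (a1*b1+a2*b2+a3*b3+a4*b4+a5*b5+a6*b6+a7*b7)*a1 = 0 \<and> (a1^2+a2^2+a3^2+a4^2+a5^2+a6^2+a7^2)*b2 - (a1*b1+a2*b2+a3*b3+a4*b4+a5*b5+a6*b6+a7*b7)*a2 = 0 \<and> (a1^2+a2^2+a3^2+a4^2+a5^2+a6^2+a7^2)*b3 - (a1*b1+a2*b2+a3*b3+a4*b4+a5*b5+a6*b6+a7*b7)*a3 = 0 \<and> (a1^2+a2^2+a3^2+a4^2+a5^2+a6^2+a7^2)*b4 - (a1*b1+a2*b2+a3*b3+a4*b4+a5*b5+a6*b6+a7*b7)*a4 = 0 \<and> (a1^2+a2^2+a3^2+a4^2+a5^2+a6^2+a7^2)*b5 - (a1*b1+a2*b2+a3*b3+a4*b4+a5*b5+a6*b6+a7*b7)*a5 = 0 \<and> (a1^2+a2^2+a3^2+a4^2+a5^2+a6^2+a7^2)*b6 - (a1*b1+a2*b2+a3*b3+a4*b4+a5*b5+a6*b6+a7*b7)*a6 = 0 \<and> (a1^2+a2^2+a3^2+a4^2+a5^2+a6^2+a7^2)*b7 - (a1*b1+a2*b2+a3*b3+a4*b4+a5*b5+a6*b6+a7*b7)*a7 = 0"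
proof -
  have L: "(a1^2+a2^2+a3^2+a4^2+a5^2+a6^2+a7^2)*(b1^2+b2^2+b3^2+b4^2+b5^2+b6^2+b7^2) - (a1*b1+a2*b2+a3*b3+a4*b4+a5*b5+a6*b6+a7*b7)^2 = 0" using lag[of a1 a2 a3 a4 a5 a6 a7 b1 b2 b3 b4 b5 b6 b7] assms by simp
  have "((a1^2+a2^2+a3^2+a4^2+a5^2+a6^2+a7^2)*b1 - (a1*b1+a2*b2+a3*b3+a4*b4+a5*b5+a6*b6+a7*b7)*a1)^2 + ((a1^2+a2^2+a3^2+a4^2+a5^2+a6^2+a7^2)*b2 - (a1*b1+a2*b2+a3*b3+a4*b4+a5*b5+a6*b6+a7*b7)*a2)^2 + ((a1^2+a2^2+a3^2+a4^2+a5^2+a6^2+a7^2)*b3 - (a1*b1+a2*b2+a3*b3+a4*b4+a5*b5+a6*b6+a7*b7)*a3)^2 + ((a1^2+a2^2+a3^2+a4^2+a5^2+a6^2+a7^2)*b4 - (a1*b1+a2*b2+a3*b3+a4*b4+a5*b5+a6*b6+a7*b7)*a4)^2 + ((a1^2+a2^2+a3^2+a4^2+a5^2+a6^2+a7^2)*b5 - (a1*b1+a2*b2+a3*b3+a4*b4+a5*b5+a6*b6+a7*b7)*a5)^2 + ((a1^2+a2^2+a3^2+a4^2+a5^2+a6^2+a7^2)*b6 - (a1*b1+a2*b2+a3*b3+a4*b4+a5*b5+a6*b6+a7*b7)*a6)^2 + ((a1^2+a2^2+a3^2+a4^2+a5^2+a6^2+a7^2)*b7 - (a1*b1+a2*b2+a3*b3+a4*b4+a5*b5+a6*b6+a7*b7)*a7)^2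 = (a1^2+a2^2+a3^2+a4^2+a5^2+a6^2+a7^2)*((a1^2+a2^2+a3^2+a4^2+a5^2+a6^2+a7^2)*(b1^2+b2^2+b3^2+b4^2+b5^2+b6^2+b7^2) - (a1*b1+a2*b2+a3*b3+a4*b4+a5*b5+a6*b6+a7*b7)^2)"
    by algebra
  with L have "((a1^2+a2^2+a3^2+a4^2+a5^2+a6^2+a7^2)*b1 - (a1*b1+a2*b2+a3*b3+a4*b4+a5*b5+a6*b6+a7*b7)*a1)^2 + ((a1^2+a2^2+a3^2+a4^2+a5^2+a6^2+a7^2)*b2 - (a1*b1+a2*b2+a3*b3+a4*b4+a5*b5+a6*b6+a7*b7)*a2)^2 + ((a1^2+a2^2+a3^2+a4^2+a5^2+a6^2+a7^2)*b3 - (a1*b1+a2*b2+a3*b3+a4*b4+a5*b5+a6*b6+a7*b7)*a3)^2 + ((a1^2+a2^2+a3^2+a4^2+a5^2+a6^2+a7^2)*b4 - (a1*b1+a2*b2+a3*b3+a4*b4+a5*b5+a6*b6+a7*b7)*a4)^2 + ((a1^2+a2^2+a3^2+a4^2+a5^2+a6^2+a7^2)*b5 - (a1*b1+a2*b2+a3*b3+a4*b4+a5*b5+a6*b6+a7*b7)*a5)^2 + ((a1^2+a2^2+a3^2+a4^2+a5^2+a6^2+a7^2)*b6 - (a1*b1+a2*b2+a3*b3+a4*b4+a5*b5+a6*b6+a7*b7)*a6)^2 + ((a1^2+a2^2+a3^2+a4^2+a5^2+a6^2+a7^2)*b7 - (a1*b1+a2*b2+a3*b3+a4*b4+a5*b5+a6*b6+a7*b7)*a7)^2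 = 0" by simp
  from sq7[OF this] show ?thesis .
qed

lemma g2_parallel:
  fixes f :: "nat \<Rightarrow> 'a::euclidean_space \<Rightarrow> real"
  assumes D: "DIM('a) = 7" and db: "dual_basis7 f" and X0: "X \<noteq> 0"
    and h: "\<And>y. wedge3 (f 1) (f 2) (f 7) X y Z + wedge3 (f 3) (f 4) (f 7) X y Z + wedge3 (f 5) (f 6) (f 7) X y Z + wedge3 (f 1) (f 3) (f 5) X y Z - wedge3 (f 2) (f 3) (f 6) X y Z - wedge3 (f 1) (f 4) (f 6) X y Z - wedge3 (f 2) (f 4) (f 5) X y Z = 0"
  shows "Z \<in> span {X}"
proof -
  define c where "c k = (if k = 1 then (- f 2 X * f 7 Z + f 7 X * f 2 Z - f 3 X * f 5 Z + f 5 X * f 3 Z + f 4 X * f 6 Z - f 6 X * f 4 Z) else if k = 2 then (f 1 X * f 7 Z - f 7 X * f 1 Z + f 3 X * f 6 Z - f 6 X * f 3 Z + f 4 X * f 5 Z - f 5 X * f 4 Z) else if k = 3 then (- f 4 X * f 7 Z + f 7 X * f 4 Z + f 1 X * f 5 Z - f 5 X * f 1 Z - f 2 X * f 6 Z + f 6 X * f 2 Z) else if k = 4 then (f 3 X * f 7 Z - f 7 X * f 3 Z - f 1 X * f 6 Z + f 6 X * f 1 Z - f 2 X * f 5 Z + f 5 X * f 2 Z) else if k = 5 then (- f 6 X * f 7 Z + f 7 X * f 6 Z - f 1 X * f 3 Z + f 3 X * f 1 Z + f 2 X * f 4 Z - f 4 X * f 2 Z) else if k = 6 then (f 5 X * f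 7 Z - f 7 X * f 5 Z + f 2 X * f 3 Z - f 3 X * f 2 Z + f 1 X * f 4 Z - f 4 X * f 1 Z) else (- f 1 X * f 2 Z + f 2 X * f 1 Z - f 3 X * f 4 Z + f 4 X * f 3 Z - f 5 X * f 6 Z + f 6 X * f 5 Z))" for k :: nat
  have E: "\<forall>y. (\<Sum>k=1..7. c k * f k y) = 0"
  proof
    fix y
    have "(\<Sum>k=1..7. c k * f k y) = wedge3 (f 1) (f 2) (f 7) X y Z + wedge3 (f 3) (f 4) (f 7) X y Z + wedge3 (f 5) (f 6) (f 7) X y Z + wedge3 (f 1) (f 3) (f 5) X y Z - wedge3 (f 2) (f 3) (f 6) X y Z - wedge3 (f 1) (f 4) (f 6) X y Z - wedge3 (f 2) (f 4) (f 5) X y Z"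
      unfolding sum7 c_def wedge3_def
      apply simp
      apply algebra
      done
    then show "(\<Sum>k=1..7. c k * f k y) = 0" using h by simp
  qed
  then have cz: "\<forall>k\<in>{1..7}. c k = 0" using db unfolding dual_basis7_def by blast
  have w1: "- f 2 X * f 7 Z + f 7 X * f 2 Z - f 3 X * f 5 Z + f 5 X * f 3 Z + f 4 X * f 6 Z - f 6 X * f 4 Z = 0" using cz[rule_format, of 1] by (simp add: c_def)
  have w2: "f 1 X * f 7 Z - f 7 X * f 1 Z + f 3 X * f 6 Z - f 6 X * f 3 Z + f 4 X * f 5 Z - f 5 X * f 4 Z = 0" using cz[rule_format, of 2] by (simp add: c_def)
  have w3: "- f 4 X * f 7 Z + f 7 X * f 4 Z + f 1 X * f 5 Z - f 5 X * f 1 Z - f 2 X * f 6 Z + f 6 X * f 2 Z = 0" using cz[rule_format, of 3] by (simp add: c_def)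
  have w4: "f 3 X * f 7 Z - f 7 X * f 3 Z - f 1 X * f 6 Z + f 6 X * f 1 Z - f 2 X * f 5 Z + f 5 X * f 2 Z = 0" using cz[rule_format, of 4] by (simp add: c_def)
  have w5: "- f 6 X * f 7 Z + f 7 X * f 6 Z - f 1 X * f 3 Z + f 3 X * f 1 Z + f 2 X * f 4 Z - f 4 X * f 2 Z = 0" using cz[rule_format, of 5] by (simp add: c_def)
  have w6: "f 5 X * f 7 Z - f 7 X * f 5 Z + f 2 X * f 3 Z - f 3 X * f 2 Z + f 1 X * f 4 Z - f 4 X * f 1 Z = 0" using cz[rule_format, of 6] by (simp add: c_def)
  have w7: "- f 1 X * f 2 Z + f 2 X * f 1 Z - f 3 X * f 4 Z + f 4 X * f 3 Z - f 5 X * f 6 Z + f 6 X * f 5 Z = 0" using cz[rule_format, of 7] by (simp add: c_def)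
  have K: "(f 1 X^2+f 2 X^2+f 3 X^2+f 4 X^2+f 5 X^2+f 6 X^2+f 7 X^2) * f 1 Z - (f 1 X * f 1 Z+f 2 X * f 2 Z+f 3 X * f 3 Z+f 4 X * f 4 Z+f 5 X * f 5 Z+f 6 X * f 6 Z+f 7 X * f 7 Z) * f 1 X = 0 \<and> (f 1 X^2+f 2 X^2+f 3 X^2+f 4 X^2+f 5 X^2+f 6 X^2+f 7 X^2) * f 2 Z - (f 1 X * f 1 Z+f 2 X * f 2 Z+f 3 X * f 3 Z+f 4 X * f 4 Z+f 5 X * f 5 Z+f 6 X * f 6 Z+f 7 X * f 7 Z) * f 2 X = 0 \<and> (f 1 X^2+f 2 X^2+f 3 X^2+f 4 X^2+f 5 X^2+f 6 X^2+f 7 X^2) * f 3 Z - (f 1 X * f 1 Z+f 2 X * f 2 Z+f 3 X * f 3 Z+f 4 X * f 4 Z+f 5 X * f 5 Z+f 6 X * f 6 Z+f 7 X * f 7 Z) * f 3 X = 0 \<and> (f 1 X^2+f 2 X^2+f 3 X^2+f 4 X^2+f 5 X^2+f 6 X^2+f 7 X^2) * f 4 Z - (f 1 X * f 1 Z+f 2 X * f 2 Z+f 3 X * f 3 Z+f 4 X * f 4 Z+f 5 X * f 5 Z+f 6 X * f 6 Z+f 7 X * f 7 Z) * f 4 X = 0 \<and> (f 1 X^2+f 2 X^2+f 3 X^2+f 4 X^2+f 5 X^2+f 6 X^2+f 7 X^2) * f 5 Z - (f 1 X * f 1 Z+f 2 X * f 2 Z+f 3 X * f 3 Z+f 4 X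 * f 4 Z+f 5 X * f 5 Z+f 6 X * f 6 Z+f 7 X * f 7 Z) * f 5 X = 0 \<and> (f 1 X^2+f 2 X^2+f 3 X^2+f 4 X^2+f 5 X^2+f 6 X^2+f 7 X^2) * f 6 Z - (f 1 X * f 1 Z+f 2 X * f 2 Z+f 3 X * f 3 Z+f 4 X * f 4 Z+f 5 X * f 5 Z+f 6 X * f 6 Z+f 7 X * f 7 Z) * f 6 X = 0 \<and> (f 1 X^2+f 2 X^2+f 3 X^2+f 4 X^2+f 5 X^2+f 6 X^2+f 7 X^2) * f 7 Z - (f 1 X * f 1 Z+f 2 X * f 2 Z+f 3 X * f 3 Z+f 4 X * f 4 Z+f 5 X * f 5 Z+f 6 X * f 6 Z+f 7 X * f 7 Z) * f 7 X = 0"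
    using key[OF w1 w2 w3 w4 w5 w6 w7] .
  define N where "N = (f 1 X^2+f 2 X^2+f 3 X^2+f 4 X^2+f 5 X^2+f 6 X^2+f 7 X^2)"
  define P where "P = (f 1 X * f 1 Z+f 2 X * f 2 Z+f 3 X * f 3 Z+f 4 X * f 4 Z+f 5 X * f 5 Z+f 6 X * f 6 Z+f 7 X * f 7 Z)"
  have K': "N * f j Z - P * f j X = 0" if "j \<in> {1..7}" for j
    using K that unfolding N_def P_def set7 by auto
  have lin: "\<And>i. i\<in>{1..7} \<Longrightarrow> linear (f i)" using db by (simp add: dual_basis7_def)
  have N0: "N \<noteq> 0"
  proof
    assume "N = 0"
    then have "f 1 X = 0 \<and> f 2 X = 0 \<and> f 3 X = 0 \<and> f 4 X = 0 \<and> f 5 X = 0 \<and> f 6 X = 0 \<and> f 7 X = 0"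
      unfolding N_def by (rule sq7)
    then have "\<forall>i\<in>{1..7}. f i X = 0" unfolding set7 by auto
    then have "X = 0" using dual_kernel[OF D db] by blast
    with X0 show False by simp
  qed
  have "\<forall>i\<in>{1..7}. f i (N *\<^sub>R Z - P *\<^sub>R X) = 0"
  proof
    fix i assume i: "i \<in> {1..7::nat}"
    have "f i (N *\<^sub>R Z - P *\<^sub>R X) = N * f i Z - P * f i X"
      using lin[OF i] by (simp add: linear_diff linear_scale)
    then show "f i (N *\<^sub>R Z - P *\<^sub>R X) = 0" using K'[OF i] by simp
  qed
  then have "N *\<^sub>R Z - P *\<^sub>R X = 0" using dual_kernel[OF D db] by blast
  then have "N *\<^sub>R Z = P *\<^sub>R X" by simp
  then have "inverse N *\<^sub>R (N *\<^sub>R Z) = inverse N *\<^sub>R (P *\<^sub>R X)" by simp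
  then have "Z = (P / N) *\<^sub>R X" using N0 by (simp add: divide_inverse mult.commute)
  then show ?thesis using span_scale[OF span_base[of X "{X}"], of "P / N"] by simp
qed

lemma transition: "P 0 \<Longrightarrow> \<not> P N \<Longrightarrow> \<exists>m. P m \<and> \<not> P (Suc m)"
  by (induction N) auto

lemma zero_lcs: "0 \<in> lcs br k"
  by (cases k) (auto simp: span_zero)

lemma lie_antisym:
  assumes "lie_algebra br" shows "br x y = - br y x"
proof -
  have bil: "bilinear br" and z: "\<And>x. br x x = 0" using assms by (auto simp: lie_algebra_def)
  have "br (x + y) (x + y) = br x x + br x y + (br y x + br y y)"
    by (simp add: bilinear_ladd[OF bil] bilinear_radd[OF bil])
  then have "br x y + br y x = 0" using z[of "x+y"] z[of x] z[of y] by simp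
  then show ?thesis by (simp add: eq_neg_iff_add_eq_0)
qed

lemma three_form_wedge3:
  assumes la: "linear a" and lb: "linear b" and lc: "linear c"
  shows "three_form (wedge3 a b c)"
proof -
  note L = linear_add[OF la] linear_add[OF lb] linear_add[OF lc]
    linear_scale[OF la] linear_scale[OF lb] linear_scale[OF lc]
  have l1: "\<forall>y z. linear (\<lambda>x. wedge3 a b c x y z)"
    by (intro allI, rule linearI) (simp_all add: wedge3_def L algebra_simps)
  have l2: "\<forall>x z. linear (\<lambda>y. wedge3 a b c x y z)"
    by (intro allI, rule linearI) (simp_all add: wedge3_def L algebra_simps)
  have l3: "\<forall>x y. linear (\<lambda>z. wedge3 a b c x y z)"
    by (intro allI, rule linearI) (simp_all add: wedge3_def L algebra_simps)
  have a1: "\<forall>x z. wedge3 a b c x x z = 0" and a2: "\<forall>x y. wedge3 a b c x y y = 0"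
    and a3: "\<forall>x y. wedge3 a b c x y x = 0" by (simp_all add: wedge3_def algebra_simps)
  show ?thesis
    unfolding three_form_def using l1 l2 l3 a1 a2 a3 by blast
qed

lemma three_form_add:
  assumes "three_form p" "three_form q"
  shows "three_form (\<lambda>x y z. p x y z + q x y z)"
  using assms unfolding three_form_def by (simp add: linear_compose_add)

lemma three_form_diff:
  assumes "three_form p" "three_form q"
  shows "three_form (\<lambda>x y z. p x y z - q x y z)"
  using assms unfolding three_form_def by (simp add: linear_compose_sub)

theorem mainTheorem5:
  fixes br :: "'a::euclidean_space \<Rightarrow> 'a \<Rightarrow> 'a"
    and \<phi> :: "'a \<Rightarrow> 'a \<Rightarrow> 'a \<Rightarrow> real"
  assumes "DIM('a) = 7"
    and "nilpotent_lie br"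
    and "calibrated_G2 br \<phi>"
  shows "\<not> exact3 br \<phi> \<and> H3_nonzero br"
proof -
  note D = assms(1)
  from assms(2) have lie: "lie_algebra br" and nil: "\<exists>n. lcs br n = {0}"
    by (auto simp: nilpotent_lie_def)
  from assms(3) have closed: "ce_d3 br \<phi> = (\<lambda>x y z w. 0)" and "G2_structure \<phi>"
    by (auto simp: calibrated_G2_def)
  then obtain f where db: "dual_basis7 f" and phi: "\<phi> = (\<lambda>x y z. wedge3 (f 1) (f 2) (f 7) x y z + wedge3 (f 3) (f 4) (f 7) x y z
                 + wedge3 (f 5) (f 6) (f 7) x y z + wedge3 (f 1) (f 3) (f 5) x y z
                 - wedge3 (f 2) (f 3) (f 6) x y z - wedge3 (f 1) (f 4) (f 6) x y z
                 - wedge3 (f 2) (f 4) (f 5) x y z)"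
    unfolding G2_structure_def by blast
  have bil: "bilinear br" using lie by (simp add: lie_algebra_def)
  have notexact: "\<not> exact3 br \<phi>"
  proof
    assume "exact3 br \<phi>"
    then obtain b where tb: "two_form b" and pe: "\<phi> = ce_d2 br b" by (auto simp: exact3_def)
    have bb: "bilinear b" and bz: "\<And>x. b x x = 0" using tb by (auto simp: two_form_def)
    define N where "N = (LEAST n. lcs br n = {0})"
    have LN: "lcs br N = {0}" unfolding N_def using LeastI_ex[OF nil] .
    obtain e :: 'a where e: "e \<in> Basis" using D
      by (metis card.empty ex_in_conv zero_neq_numeral)
    have e0: "e \<noteq> 0" using e by (auto simp: nonzero_Basis)
    have N0: "N \<noteq> 0" using LN e0 by (cases "N = 0") auto
    have "lcs br (N - 1) \<noteq> {0}"
    proof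
      assume "lcs br (N - 1) = {0}"
      then have "N \<le> N - 1" unfolding N_def by (rule Least_le)
      with N0 show False by simp
    qed
    then obtain X where XL: "X \<in> lcs br (N - 1)" and X0: "X \<noteq> 0"
      using zero_lcs[of br "N - 1"] by blast
    have central: "br y X = 0" for y
    proof -
      have "br y X \<in> lcs br (Suc (N - 1))"
        using XL by (auto intro!: span_base)
      then show ?thesis using LN N0 by simp
    qed
    have central2: "br X y = 0" for y using lie_antisym[OF lie, of X y] central by simp
    have notU: "\<not> lcs br 0 \<subseteq> span {X}"
    proof
      assume "lcs br 0 \<subseteq> span {X}"
      then have "span {X} = UNIV" by auto
      then have "dim {X} = DIM('a)" using dim_eq_full by metis
      moreover have "dim {X} \<le> card {X}" by (rule dim_le_card) (auto intro: span_base)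
      ultimately show False using D by simp
    qed
    have "\<not> \<not> lcs br N \<subseteq> span {X}" using LN by (simp add: span_zero)
    then obtain m where m1: "\<not> lcs br m \<subseteq> span {X}" and m2: "lcs br (Suc m) \<subseteq> span {X}"
      using transition[of "\<lambda>k. \<not> lcs br k \<subseteq> span {X}" N] notU by blast
    then obtain Z where ZL: "Z \<in> lcs br m" and ZX: "Z \<notin> span {X}" by blast
    have "\<phi> X y Z = 0" for y
    proof -
      have "br y Z \<in> lcs br (Suc m)" using ZL by (auto intro!: span_base)
      then have "br y Z \<in> span {X}" using m2 by blast
      then obtain k where k: "br y Z = k *\<^sub>R X" by (auto simp: span_singleton)
      show ?thesis
        unfolding pe ce_d2_def
        using central2 k bilinear_lzero[OF bb] bilinear_lmul[OF bb] bz by simp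
    qed
    then have "Z \<in> span {X}"
      using g2_parallel[OF D db X0] unfolding phi by simp
    with ZX show False by simp
  qed
  have lin: "\<And>i. i\<in>{1..7} \<Longrightarrow> linear (f i)" using db by (simp add: dual_basis7_def)
  have W: "three_form (wedge3 (f i) (f j) (f k))" if "i\<in>{1..7}" "j\<in>{1..7}" "k\<in>{1..7}" for i j k
    using three_form_wedge3[OF lin lin lin] that by blast
  have "three_form \<phi>"
    unfolding phi
    by (intro three_form_add three_form_diff W) auto
  then have "H3_nonzero br"
    unfolding H3_nonzero_def using closed notexact by blast
  with notexact show ?thesis by simp
qed

end
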